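(* Let $x$ and $y$ be finite sequences of strings and $\lambda\ge0$. The tree $T^\ast$ built by $\textsc{BuildBifurcation}(x,y,\lambda)$ satisfies $\mathrm{error}_\lambda(T^\ast)\le\mathsf{EDG}(x,y,\lambda)$.
   Context: Strings are over a finite alphabet; $\varepsilon$ is the empty string and $\mathsf{ED}$ is Levenshtein edit distance (unit costs). $\mathsf{AED}(x,y)$ for string sequences is the minimum cost of transforming $x$ into $y$ using only inserting a string $w$ into $x$ (cost $\mathsf{ED}(w,\varepsilon)$) and substituting a string $w$ of $x$ by $w'$ (cost $\mathsf{ED}(w,w')$), with no deletions (defined only if $|x|\le|y|$). A labeled summary tree of $\{x,y\}$ is a rooted tree with a sentinel root, other nodes labeled by strings, with $x$ and $y$ assigned to nodes $v_x,v_y$; $L_T(v)$ is the label sequence on the root-to-$v$ path excluding the sentinel; $|T|$ counts non-sentinel nodes; $\mathrm{error}_\lambda(T)=\mathsf{AED}(x,L_T(v_x))+\mathsf{AED}(y,L_T(v_y))+\lambda|T|$. $\mathsf{EDG}(i,j,\lambda)$ ($1\le i\le|x|+1$, $1\le j\le|y|+1$): $\mathsf{EDG}(|x|+1,|y|+1,\lambda)=0$, $\mathsf{EDG}(i,|y|+1,\lambda)=\lambda(|x|-i+1)$, $\mathsf{EDG}(|x|+1,j,\lambda)=\lambda(|y|-j+1)$, and otherwise the minimum of $\mathsf{EDG}(i+1,j+1,\lambda)+\lambda+\mathsf{ED}(x_i,y_j)$, $\mathsf{EDG}(i,j+1,\lambda)+\lambda+\mathsf{ED}(\varepsilon,y_j)$,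 $\mathsf{EDG}(i+1,j,\lambda)+\lambda+\mathsf{ED}(x_i,\varepsilon)$, and $\lambda(|x|-i+1)+\lambda(|y|-j+1)$ (give up); $\mathsf{EDG}(x,y,\lambda)=\mathsf{EDG}(1,1,\lambda)$. $\textsc{BuildBifurcation}(x,y,\lambda)$ builds a tree recursively following an optimal choice in this recurrence: both empty gives the empty tree; insertion of $y_1$ (or $x$ empty) gives a node labeled $y_1$ above $\textsc{BuildBifurcation}(x,y_{2..|y|},\lambda)$; deletion of $x_1$ (or $y$ empty) gives a node labeled $x_1$ above $\textsc{BuildBifurcation}(x_{2..|x|},y,\lambda)$; substitution gives a node labeled $x_1$ above $\textsc{BuildBifurcation}(x_{2..|x|},y_{2..|y|},\lambda)$; give up places two disjoint paths labeled successively by the remaining strings of $x$ and of $y$. The sequence $x$ (resp. $y$) is mapped to the node created for its last string. *)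

theory Defs
  imports Main "HOL.Real"
begin

fun ED :: "'a list \<Rightarrow> 'a list \<Rightarrow> nat" where
  "ED [] ys = length ys"
| "ED (a # xs) [] = length (a # xs)"
| "ED (a # xs) (b # ys) =
     min (min (ED xs ys + (if a = b then 0 else 1)) (ED xs (b # ys) + 1)) (ED (a # xs) ys + 1)"

inductive aed_reach :: "'a list list \<Rightarrow> 'a list list \<Rightarrow> nat \<Rightarrow> bool" where
  refl: "aed_reach x x 0"
| ins: "aed_reach x z c \<Longrightarrow> i \<le> length z \<Longrightarrow>
          aed_reach x (take i z @ w # drop i z) (c + ED w [])"
| subst: "aed_reach x z c \<Longrightarrow> i < length z \<Longrightarrow>
          aed_reach x (z[i := w]) (c + ED (z ! i) w)"

text \<open>AED is defined (only) when length x \<le> length y; then the set below is nonempty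
  and Inf is its least element.\<close>

definition AED :: "'a list list \<Rightarrow> 'a list list \<Rightarrow> nat" where
  "AED x y = Inf {c. aed_reach x y c}"

text \<open>A labeled summary tree is represented by the forest of subtrees of the sentinel
  root. Nodes are addressed by paths of child indices; the empty path is the sentinel.\<close>

datatype 'a ltree = LNode (label: "'a list") (children: "'a ltree list")

fun tsize :: "'a ltree \<Rightarrow> nat" where
  "tsize (LNode l cs) = Suc (sum_list (map tsize cs))"

definition fsize :: "'a ltree list \<Rightarrow> nat" where
  "fsize F = sum_list (map tsize F)"

fun path_labels :: "'a ltree list \<Rightarrow> nat list \<Rightarrow> 'a list list" where
  "path_labels F [] = []"
| "path_labels F (i # p) = label (F ! i) # path_labels (children (F ! i)) p"

definition error :: "real \<Rightarrow> 'a list list \<Rightarrow> 'a list list \<Rightarrow> 'a ltree list \<Rightarrow> nat list \<Rightarrow> nat list \<Rightarrow> real" where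
  "error lam x y F vx vy =
     real (AED x (path_labels F vx)) + real (AED y (path_labels F vy)) + lam * real (fsize F)"

fun EDG :: "'a list list \<Rightarrow> 'a list list \<Rightarrow> real \<Rightarrow> real" where
  "EDG [] [] lam = 0"
| "EDG (a # xs) [] lam = lam * real (length (a # xs))"
| "EDG [] (b # ys) lam = lam * real (length (b # ys))"
| "EDG (a # xs) (b # ys) lam =
     min (min (EDG xs ys lam + lam + real (ED a b))
              (EDG (a # xs) ys lam + lam + real (ED [] b)))
         (min (EDG xs (b # ys) lam + lam + real (ED a []))
              (lam * real (length (a # xs)) + lam * real (length (b # ys))))"

fun chain :: "'a list list \<Rightarrow> 'a ltree list" where
  "chain [] = []"
| "chain (s # ss) = [LNode s (chain ss)]"

text \<open>build_bif x y lam (F, vx, vy): (F, vx, vy) is a tree (forest below the sentinel)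
  with the nodes vx, vy, obtainable by BuildBifurcation following some optimal choice.\<close>

inductive build_bif :: "'a list list \<Rightarrow> 'a list list \<Rightarrow> real \<Rightarrow> 'a ltree list \<times> nat list \<times> nat list \<Rightarrow> bool" where
  empty: "build_bif [] [] lam ([], [], [])"
| insert: "build_bif x ys lam (F, px, py) \<Longrightarrow>
      x = [] \<or> EDG x (b # ys) lam = EDG x ys lam + lam + real (ED [] b) \<Longrightarrow>
      build_bif x (b # ys) lam ([LNode b F], if x = [] then [] else 0 # px, 0 # py)"
| delete: "build_bif xs y lam (F, px, py) \<Longrightarrow>
      y = [] \<or> EDG (a # xs) y lam = EDG xs y lam + lam + real (ED a []) \<Longrightarrow>
      build_bif (a # xs) y lam ([LNode a F], 0 # px, if y = [] then [] else 0 # py)"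
| substitute: "build_bif xs ys lam (F, px, py) \<Longrightarrow>
      EDG (a # xs) (b # ys) lam = EDG xs ys lam + lam + real (ED a b) \<Longrightarrow>
      build_bif (a # xs) (b # ys) lam ([LNode a F], 0 # px, 0 # py)"
| giveup: "EDG (a # xs) (b # ys) lam =
        lam * real (length (a # xs)) + lam * real (length (b # ys)) \<Longrightarrow>
      build_bif (a # xs) (b # ys) lam
        ([hd (chain (a # xs)), hd (chain (b # ys))],
         replicate (length (a # xs)) 0, 1 # replicate (length ys) 0)"

end

theory Submission
  imports Defs
begin

lemma ED_nil2: "ED xs [] = length xs"
  by (cases xs) auto

lemma ED_sym: "ED xs ys = ED ys xs"
  by (induction xs ys rule: ED.induct) (auto simp: ED_nil2 min.commute min.left_commute)

lemma aed_len: "aed_reach x z c \<Longrightarrow> length x \<le> length z"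
  by (induction rule: aed_reach.induct) auto

lemma aed_cons: "aed_reach x z c \<Longrightarrow> aed_reach (b#x) (b#z) c"
proof (induction rule: aed_reach.induct)
  case (refl x) then show ?case by (rule aed_reach.refl)
next
  case (ins x z c i w)
  have "aed_reach (b#x) (take (Suc i) (b#z) @ w # drop (Suc i) (b#z)) (c + ED w [])"
    by (rule aed_reach.ins) (use ins in auto)
  then show ?case by simp
next
  case (subst x z c i w)
  have "aed_reach (b#x) ((b#z)[Suc i := w]) (c + ED ((b#z) ! Suc i) w)"
    by (rule aed_reach.subst) (use subst in auto)
  then show ?case by simp
qed

lemma aed_front_ins: "aed_reach x z c \<Longrightarrow> aed_reach x (w#z) (c + ED w [])"
  using aed_reach.ins[of x z c 0 w] by simp

lemma aed_front_sub: "aed_reach x (a#z) c \<Longrightarrow> aed_reach x (w#z) (c + ED a w)"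
  using aed_reach.subst[of x "a#z" c 0 w] by simp

lemma AED_le: "aed_reach x z c \<Longrightarrow> AED x z \<le> c"
  unfolding AED_def Inf_nat_def by (rule Least_le) simp

lemma chain_path: "path_labels (chain s) (replicate (length s) 0) = s"
  by (induction s) auto

lemma chain_size: "fsize (chain s) = length s"
  by (induction s) (auto simp: fsize_def)

lemma EDG_nil1: "EDG [] ys lam = lam * real (length ys)"
  by (cases ys) auto

lemma EDG_nil2: "EDG xs [] lam = lam * real (length xs)"
  by (cases xs) auto

lemma main:
  assumes "build_bif x y lam T" "lam \<ge> 0"
  shows "\<exists>cx cy. aed_reach x (path_labels (fst T) (fst (snd T))) cx
           \<and> aed_reach y (path_labels (fst T) (snd (snd T))) cy
           \<and> real cx + real cy + lam * real (fsize (fst T)) \<le> EDG x y lam"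
  using assms
proof (induction rule: build_bif.induct)
  case (empty lam)
  then show ?case by (auto intro!: exI[of _ 0] aed_reach.refl simp: fsize_def)
next
  case (insert x ys lam F px py b)
  then obtain cx cy where h: "aed_reach x (path_labels F px) cx" "aed_reach ys (path_labels F py) cy"
    "real cx + real cy + lam * real (fsize F) \<le> EDG x ys lam" by auto
  have fs: "fsize [LNode b F] = Suc (fsize F)" by (simp add: fsize_def)
  have y': "aed_reach (b#ys) (path_labels [LNode b F] (0#py)) cy"
    using aed_cons[OF h(2)] by simp
  show ?case
  proof (cases "x = []")
    case True
    have "real cy + lam * real (fsize [LNode b F]) \<le> EDG [] (b#ys) lam"
      using h(3) True fs by (simp add: EDG_nil1 algebra_simps)
    then show ?thesis using True y' aed_reach.refl[of "[]::'a list list"] by (intro exI[of _ 0] exI[of _ cy]) simp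
  next
    case False
    have x': "aed_reach x (path_labels [LNode b F] (0#px)) (cx + ED b [])"
      using aed_front_ins[OF h(1)] by simp
    have "real (cx + ED b []) + real cy + lam * real (fsize [LNode b F]) \<le> EDG x (b#ys) lam"
      using h(3) False insert.hyps(2) fs by (simp add: ED_sym[of b] algebra_simps)
    then show ?thesis using False x' y' by (intro exI[of _ "cx + ED b []"] exI[of _ cy]) simp
  qed
next
  case (delete xs y lam F px py a)
  then obtain cx cy where h: "aed_reach xs (path_labels F px) cx" "aed_reach y (path_labels F py) cy"
    "real cx + real cy + lam * real (fsize F) \<le> EDG xs y lam" by auto
  have fs: "fsize [LNode a F] = Suc (fsize F)" by (simp add: fsize_def)
  have x': "aed_reach (a#xs) (path_labels [LNode a F] (0#px)) cx"
    using aed_cons[OF h(1)] by simp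
  show ?case
  proof (cases "y = []")
    case True
    have "real cx + lam * real (fsize [LNode a F]) \<le> EDG (a#xs) [] lam"
      using h(3) True fs by (simp add: EDG_nil2 algebra_simps)
    then show ?thesis using True x' aed_reach.refl[of "[]::'a list list"] by (intro exI[of _ cx] exI[of _ 0]) simp
  next
    case False
    have y': "aed_reach y (path_labels [LNode a F] (0#py)) (cy + ED a [])"
      using aed_front_ins[OF h(2)] by simp
    have "real cx + real (cy + ED a []) + lam * real (fsize [LNode a F]) \<le> EDG (a#xs) y lam"
      using h(3) False delete.hyps(2) fs by (simp add: algebra_simps)
    then show ?thesis using False x' y' by (intro exI[of _ cx] exI[of _ "cy + ED a []"]) simp
  qed
next
  case (substitute xs ys lam F px py a b)
  then obtain cx cy where h: "aed_reach xs (path_labels F px) cx" "aed_reach ys (path_labels F py) cy"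
    "real cx + real cy + lam * real (fsize F) \<le> EDG xs ys lam" by auto
  have fs: "fsize [LNode a F] = Suc (fsize F)" by (simp add: fsize_def)
  have x': "aed_reach (a#xs) (path_labels [LNode a F] (0#px)) cx"
    using aed_cons[OF h(1)] by simp
  have y': "aed_reach (b#ys) (path_labels [LNode a F] (0#py)) (cy + ED b a)"
    using aed_front_sub[OF aed_cons[OF h(2)]] by simp
  have "real cx + real (cy + ED b a) + lam * real (fsize [LNode a F]) \<le> EDG (a#xs) (b#ys) lam"
  proof -
    have "real cx + real (cy + ED b a) + lam * real (fsize [LNode a F]) \<le> EDG xs ys lam + lam + real (ED a b)"
      using h(3) fs by (simp add: ED_sym[of b] algebra_simps)
    then show ?thesis using substitute.hyps(2) by linarith
  qed
  then show ?case using x' y' by (intro exI[of _ cx] exI[of _ "cy + ED b a"]) simp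
next
  case (giveup a xs b ys lam)
  have p1: "path_labels [hd (chain (a # xs)), hd (chain (b # ys))] (replicate (length (a # xs)) 0) = a#xs"
    using chain_path[of xs] by simp
  have p2: "path_labels [hd (chain (a # xs)), hd (chain (b # ys))] (1 # replicate (length ys) 0) = b#ys"
    using chain_path[of ys] by simp
  have fs: "fsize [hd (chain (a # xs)), hd (chain (b # ys))] = length (a#xs) + length (b#ys)"
    using chain_size[of xs] chain_size[of ys] by (simp add: fsize_def)
  show ?case using giveup.hyps p1 p2 fs
    by (auto intro!: exI[of _ 0] aed_reach.refl simp: algebra_simps)
qed

theorem lemma9:
  fixes x y :: "'a list list" and lam :: real
    and F :: "'a ltree list" and vx vy :: "nat list"
  assumes "lam \<ge> 0"
    and "build_bif x y lam (F, vx, vy)"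
  shows "length x \<le> length (path_labels F vx)
       \<and> length y \<le> length (path_labels F vy)
       \<and> error lam x y F vx vy \<le> EDG x y lam"
proof -
  obtain cx cy where h: "aed_reach x (path_labels F vx) cx" "aed_reach y (path_labels F vy) cy"
    "real cx + real cy + lam * real (fsize F) \<le> EDG x y lam"
    using main[OF assms(2) assms(1)] by auto
  have "real (AED x (path_labels F vx)) \<le> real cx" using AED_le[OF h(1)] by simp
  moreover have "real (AED y (path_labels F vy)) \<le> real cy" using AED_le[OF h(2)] by simp
  ultimately show ?thesis using h aed_len unfolding error_def by fastforce
qed

end
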